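(* Let $\Gamma$ be an infinite connected subgraph of $\mathbb B$ with natural weights. There is a constant $c_1>0$ such that if $x\in\Gamma$, $r\ge1$, $\lambda\ge64$, and both $B(x,r)$ and $B(x,\lambda^{-5}r)$ are $\lambda$-good, then $$E^xd(x,Y_t)\ge c_1\lambda^{-12}t^{1/3}\quad\text{for }\frac{r^3}{\lambda^6}\le t\le\frac{r^3}{\lambda^5}.$$
   Context: $\mathbb B$ is the rooted tree in which every vertex has $n_0\ge2$ children. On $\Gamma$: $\mu_{xy}=1$ for adjacent $x,y$ and $0$ otherwise, $\mu_x$ the degree of $x$ in $\Gamma$, $\mu(A)=\sum_{x\in A}\mu_x$, $d$ the graph distance in $\Gamma$, $B(x,r)=\{y\in\Gamma:d(x,y)\le r\}$, $V(x,r)=\mu(B(x,r))$. $Y$ is the continuous-time simple random walk on $\Gamma$ (exponential mean-1 holding times, jumps to a uniform neighbour), $E^x$ its expectation started at $x$. $M(x,r)$ is the smallest $m$ such that there is $A=\{z_1,\dots,z_m\}\subset\Gamma$ with $d(x,z_i)\in[r/4,3r/4]$ for all $i$ such that every path in $\Gamma$ from $x$ to $\Gamma\setminus B(x,r)$ passes through $A$. The ball $B(x,s)$ is $\lambda$-good if: $x\in\Gamma$; $s^2\lambda^{-2}\le V(x,s)\le s^2\lambda$; $M(x,s)\le\lambda/64$; $V(x,s/\lambda)\ge s^2\lambda^{-4}$; $V(x,s/\lambda^2)\ge s^2\lambda^{-6}$. *)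

theory Defs
  imports Complex_Main "HOL-Library.Extended_Nat"
begin

text \<open>The rooted tree B: vertices are words over {0..<n0}; the children of u are u@[i].\<close>
definition tree_vertices :: "nat \<Rightarrow> nat list set" where
  "tree_vertices n0 = {w. \<forall>i\<in>set w. i < n0}"

definition tree_adj :: "nat \<Rightarrow> nat list \<Rightarrow> nat list \<Rightarrow> bool" where
  "tree_adj n0 u v \<longleftrightarrow> (\<exists>i<n0. v = u @ [i]) \<or> (\<exists>i<n0. u = v @ [i])"

definition subgraph_of_tree :: "nat \<Rightarrow> nat list set \<Rightarrow> (nat list \<Rightarrow> nat list \<Rightarrow> bool) \<Rightarrow> bool" where
  "subgraph_of_tree n0 V E \<longleftrightarrow> V \<subseteq> tree_vertices n0
     \<and> (\<forall>x y. E x y \<longrightarrow> x \<in> V \<and> y \<in> V \<and> tree_adj n0 x y)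
     \<and> (\<forall>x y. E x y \<longrightarrow> E y x)"

text \<open>mu_x = degree (natural weights)\<close>
definition deg :: "(nat list \<Rightarrow> nat list \<Rightarrow> bool) \<Rightarrow> nat list \<Rightarrow> nat" where
  "deg E x = card {y. E x y}"

inductive walk :: "(nat list \<Rightarrow> nat list \<Rightarrow> bool) \<Rightarrow> nat \<Rightarrow> nat list \<Rightarrow> nat list \<Rightarrow> bool"
  for E where
  walk0: "walk E 0 x x"
| walkS: "E x z \<Longrightarrow> walk E k z y \<Longrightarrow> walk E (Suc k) x y"

definition connected_graph :: "nat list set \<Rightarrow> (nat list \<Rightarrow> nat list \<Rightarrow> bool) \<Rightarrow> bool" where
  "connected_graph V E \<longleftrightarrow> (\<forall>x\<in>V. \<forall>y\<in>V. \<exists>k. walk E k x y)"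

definition gdist :: "(nat list \<Rightarrow> nat list \<Rightarrow> bool) \<Rightarrow> nat list \<Rightarrow> nat list \<Rightarrow> nat" where
  "gdist E x y = (LEAST k. walk E k x y)"

definition ball :: "nat list set \<Rightarrow> (nat list \<Rightarrow> nat list \<Rightarrow> bool) \<Rightarrow> nat list \<Rightarrow> real \<Rightarrow> nat list set" where
  "ball V E x r = {y \<in> V. real (gdist E x y) \<le> r}"

definition vol :: "nat list set \<Rightarrow> (nat list \<Rightarrow> nat list \<Rightarrow> bool) \<Rightarrow> nat list \<Rightarrow> real \<Rightarrow> real" where
  "vol V E x r = (\<Sum>y\<in>ball V E x r. real (deg E y))"

definition is_path :: "(nat list \<Rightarrow> nat list \<Rightarrow> bool) \<Rightarrow> nat list list \<Rightarrow> bool" where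
  "is_path E p \<longleftrightarrow> p \<noteq> [] \<and> (\<forall>i. Suc i < length p \<longrightarrow> E (p ! i) (p ! Suc i))"

definition separates :: "nat list set \<Rightarrow> (nat list \<Rightarrow> nat list \<Rightarrow> bool) \<Rightarrow> nat list \<Rightarrow> real \<Rightarrow> nat list set \<Rightarrow> bool" where
  "separates V E x r A \<longleftrightarrow>
     (\<forall>p. is_path E p \<and> hd p = x \<and> last p \<in> V - ball V E x r \<longrightarrow> set p \<inter> A \<noteq> {})"

text \<open>M(x,r), with inf of the empty set = infinity\<close>
definition Mcut :: "nat list set \<Rightarrow> (nat list \<Rightarrow> nat list \<Rightarrow> bool) \<Rightarrow> nat list \<Rightarrow> real \<Rightarrow> enat" where
  "Mcut V E x r = Inf {enat (card A) | A. finite A \<and> A \<subseteq> V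
       \<and> (\<forall>z\<in>A. r / 4 \<le> real (gdist E x z) \<and> real (gdist E x z) \<le> 3 * r / 4)
       \<and> separates V E x r A}"

definition good_ball :: "nat list set \<Rightarrow> (nat list \<Rightarrow> nat list \<Rightarrow> bool) \<Rightarrow> nat list \<Rightarrow> real \<Rightarrow> real \<Rightarrow> bool" where
  "good_ball V E x s lam \<longleftrightarrow> x \<in> V
     \<and> s^2 / lam^2 \<le> vol V E x s \<and> vol V E x s \<le> s^2 * lam
     \<and> Mcut V E x s \<noteq> \<infinity> \<and> real (the_enat (Mcut V E x s)) \<le> lam / 64
     \<and> vol V E x (s / lam) \<ge> s^2 / lam^4
     \<and> vol V E x (s / lam^2) \<ge> s^2 / lam^6"

text \<open>n-step transition probabilities P^n(x,y) of the discrete-time simple random walk,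
  P(z,y) = mu_zy / mu_z.\<close>
fun pn :: "(nat list \<Rightarrow> nat list \<Rightarrow> bool) \<Rightarrow> nat \<Rightarrow> nat list \<Rightarrow> nat list \<Rightarrow> real" where
  "pn E 0 x y = (if y = x then 1 else 0)"
| "pn E (Suc n) x y = (\<Sum>z\<in>{z. E z y}. pn E n x z / real (deg E z))"

text \<open>E^x d(x,Y_t) for the continuous-time SRW with mean-1 exponential holding times:
  Y_t = X_{N_t} with N_t Poisson(t) independent of the discrete walk X.\<close>
definition exp_dist :: "nat list set \<Rightarrow> (nat list \<Rightarrow> nat list \<Rightarrow> bool) \<Rightarrow> nat list \<Rightarrow> real \<Rightarrow> real" where
  "exp_dist V E x t = (\<Sum>n. exp (- t) * t ^ n / fact n *
       (\<Sum>y\<in>ball V E x (real n). pn E n x y * real (gdist E x y)))"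

end

theory Submission
  imports Defs "HOL-Analysis.Convex"
begin

locale TG =
  fixes n0 :: nat and V :: "nat list set" and E :: "nat list \<Rightarrow> nat list \<Rightarrow> bool"
  assumes sub: "subgraph_of_tree n0 V E" and conn: "connected_graph V E" and infV: "infinite V"
begin

lemma E_sym: "E a b \<longleftrightarrow> E b a"
  using sub unfolding subgraph_of_tree_def by blast

lemma E_V: "E a b \<Longrightarrow> a \<in> V \<and> b \<in> V"
  using sub unfolding subgraph_of_tree_def by blast

lemma E_adj: "E a b \<Longrightarrow> tree_adj n0 a b"
  using sub unfolding subgraph_of_tree_def by blast

lemma V_tree: "V \<subseteq> tree_vertices n0"
  using sub unfolding subgraph_of_tree_def by blast

lemma nbr_fin: "finite {z. E y z}"
proof -
  have "{z. E y z} \<subseteq> (\<lambda>i. y @ [i]) ` {..<n0} \<union> {butlast y}"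
  proof
    fix z assume "z \<in> {z. E y z}"
    then have "tree_adj n0 y z" using E_adj by auto
    then show "z \<in> (\<lambda>i. y @ [i]) ` {..<n0} \<union> {butlast y}"
      unfolding tree_adj_def by auto
  qed
  then show ?thesis by (rule finite_subset) auto
qed

lemma nbr_fin': "finite {z. E z y}"
  using nbr_fin[of y] by (simp add: E_sym)

lemma nbr_eq: "{z. E z y} = {z. E y z}"
  using E_sym by blast

lemma E_len: "E a b \<Longrightarrow> length b \<le> length a + 1"
  using E_adj unfolding tree_adj_def by fastforce

lemma walk_len: "walk E k a b \<Longrightarrow> length b \<le> length a + k"
  by (induction rule: walk.induct) (auto dest: E_len)

lemma walk_V: "walk E k a b \<Longrightarrow> a \<in> V \<Longrightarrow> b \<in> V"
  by (induction rule: walk.induct) (auto dest: E_V)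

lemma walk_snoc: "walk E k a b \<Longrightarrow> E b c \<Longrightarrow> walk E (Suc k) a c"
  by (induction rule: walk.induct) (auto intro: walk.intros)

lemma walk_0: "walk E 0 a b \<Longrightarrow> a = b"
  by (erule walk.cases) auto

lemma deg_pos: assumes "y \<in> V" shows "deg E y > 0"
proof -
  obtain v where v: "v \<in> V" "v \<noteq> y" using infV
    by (metis finite.emptyI finite_insert insert_iff subsetI finite_subset)
  then obtain k where w: "walk E k y v" using conn assms unfolding connected_graph_def by blast
  then obtain z where "E y z"
    using v(2) by (cases rule: walk.cases) auto
  then show ?thesis unfolding deg_def using nbr_fin[of y]
    by (simp add: card_gt_0_iff) blast
qed

definition Rs :: "nat list \<Rightarrow> nat \<Rightarrow> nat list set" where
  "Rs x L = {y. \<exists>j\<le>L. walk E j x y}"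

lemma Rs_fin: assumes "x \<in> V" shows "finite (Rs x L)"
proof -
  have "Rs x L \<subseteq> {w. set w \<subseteq> {..<n0} \<and> length w \<le> length x + L}"
  proof
    fix y assume "y \<in> Rs x L"
    then obtain j where j: "j \<le> L" "walk E j x y" unfolding Rs_def by blast
    then have "y \<in> V" using walk_V assms by blast
    then have "set y \<subseteq> {..<n0}" using V_tree unfolding tree_vertices_def by auto
    moreover have "length y \<le> length x + L" using walk_len[OF j(2)] j(1) by simp
    ultimately show "y \<in> {w. set w \<subseteq> {..<n0} \<and> length w \<le> length x + L}" by simp
  qed
  then show ?thesis by (rule finite_subset) (simp add: finite_lists_length_le)
qed

lemma Rs_V: "x \<in> V \<Longrightarrow> Rs x L \<subseteq> V"
  unfolding Rs_def using walk_V by blast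

lemma Rs_mono: "L \<le> L' \<Longrightarrow> Rs x L \<subseteq> Rs x L'"
  unfolding Rs_def by (blast intro: le_trans)

lemma Rs_self: "x \<in> Rs x L"
  unfolding Rs_def by (auto intro: walk.intros)

lemma Rs_nbr: "y \<in> Rs x L \<Longrightarrow> E y z \<Longrightarrow> z \<in> Rs x (Suc L)"
  unfolding Rs_def using walk_snoc by fastforce

lemma Rs_nbr': "y \<in> Rs x L \<Longrightarrow> E z y \<Longrightarrow> z \<in> Rs x (Suc L)"
  using Rs_nbr E_sym by blast

lemma pn_nonneg: "pn E n x y \<ge> 0"
  by (induction n arbitrary: y) (auto intro!: sum_nonneg)

lemma pn_supp: "pn E n x y \<noteq> 0 \<Longrightarrow> walk E n x y"
proof (induction n arbitrary: y)
  case 0 then show ?case by (auto split: if_splits intro: walk.intros)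
next
  case (Suc n)
  have "(\<Sum>z\<in>{z. E z y}. pn E n x z / real (deg E z)) \<noteq> 0" using Suc.prems by simp
  have "\<exists>z\<in>{z. E z y}. pn E n x z / real (deg E z) \<noteq> 0"
  proof (rule ccontr)
    assume "\<not> (\<exists>z\<in>{z. E z y}. pn E n x z / real (deg E z) \<noteq> 0)"
    then have "(\<Sum>z\<in>{z. E z y}. pn E n x z / real (deg E z)) = 0"
      by (intro sum.neutral) blast
    then show False using \<open>(\<Sum>z\<in>{z. E z y}. pn E n x z / real (deg E z)) \<noteq> 0\<close> by simp
  qed
  then obtain z where "z \<in> {z. E z y}" "pn E n x z / real (deg E z) \<noteq> 0" by blast
  then have "E z y" "pn E n x z \<noteq> 0" by auto
  then have "walk E n x z" using Suc.IH by auto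
  then show ?case using walk_snoc \<open>E z y\<close> by blast
qed

lemma pn_Rs: "pn E n x y \<noteq> 0 \<Longrightarrow> y \<in> Rs x n"
  unfolding Rs_def using pn_supp by blast

end

lemma sum_supp:
  assumes "finite A" "finite B" "\<And>y. f y \<noteq> 0 \<Longrightarrow> y \<in> A \<and> y \<in> B"
  shows "sum f A = sum f B"
proof -
  have "sum f A = sum f (A \<inter> B)"
    by (rule sum.mono_neutral_right) (use assms in auto)
  also have "\<dots> = sum f B"
    by (rule sum.mono_neutral_left) (use assms in auto)
  finally show ?thesis .
qed

context TG
begin

lemma swap:
  fixes h k :: "nat list \<Rightarrow> real"
  assumes F: "finite F" and h: "\<And>y. h y \<noteq> 0 \<Longrightarrow> y \<in> F" and k: "\<And>z. k z \<noteq> 0 \<Longrightarrow> z \<in> F"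
  shows "(\<Sum>y\<in>F. h y * (\<Sum>z\<in>{z. E z y}. k z)) = (\<Sum>z\<in>F. k z * (\<Sum>y\<in>{y. E z y}. h y))"
proof -
  have "(\<Sum>y\<in>F. h y * (\<Sum>z\<in>{z. E z y}. k z)) = (\<Sum>y\<in>F. (\<Sum>z\<in>{z. z \<in> F \<and> E z y}. h y * k z))"
  proof (rule sum.cong[OF refl])
    fix y assume "y \<in> F"
    have "h y * (\<Sum>z\<in>{z. E z y}. k z) = (\<Sum>z\<in>{z. E z y}. h y * k z)" by (rule sum_distrib_left)
    also have "\<dots> = (\<Sum>z\<in>{z. z \<in> F \<and> E z y}. h y * k z)"
      by (rule sum.mono_neutral_right) (use nbr_fin' F k in auto)
    finally show "h y * (\<Sum>z\<in>{z. E z y}. k z) = (\<Sum>z\<in>{z. z \<in> F \<and> E z y}. h y * k z)" .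
  qed
  also have "\<dots> = (\<Sum>z\<in>F. (\<Sum>y\<in>{y. y \<in> F \<and> E z y}. h y * k z))"
    by (rule sum.swap_restrict[OF F F])
  also have "\<dots> = (\<Sum>z\<in>F. k z * (\<Sum>y\<in>{y. E z y}. h y))"
  proof (rule sum.cong[OF refl])
    fix z assume "z \<in> F"
    have "k z * (\<Sum>y\<in>{y. E z y}. h y) = (\<Sum>y\<in>{y. E z y}. h y * k z)" by (simp add: sum_distrib_left mult.commute)
    also have "\<dots> = (\<Sum>y\<in>{y. y \<in> F \<and> E z y}. h y * k z)"
      by (rule sum.mono_neutral_right) (use nbr_fin F h in auto)
    finally show "(\<Sum>y\<in>{y. y \<in> F \<and> E z y}. h y * k z) = k z * (\<Sum>y\<in>{y. E z y}. h y)" by simp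
  qed
  finally show ?thesis .
qed

lemma stoch:
  assumes x: "x \<in> V"
  shows "n \<le> L \<Longrightarrow> (\<Sum>y\<in>Rs x L. pn E n x y) = 1"
proof (induction n arbitrary: L)
  case 0
  have "x \<in> Rs x L" by (rule Rs_self)
  then show ?case using Rs_fin[OF x] by simp
next
  case (Suc n)
  define F where "F = Rs x L"
  have F: "finite F" unfolding F_def by (rule Rs_fin[OF x])
  have RsF: "Rs x (Suc n) \<subseteq> F" unfolding F_def using Rs_mono Suc.prems by blast
  have "(\<Sum>y\<in>F. pn E (Suc n) x y) =
        (\<Sum>y\<in>F. (if y \<in> F then 1 else 0) * (\<Sum>z\<in>{z. E z y}. pn E n x z / real (deg E z)))"
    by simp
  also have "\<dots> = (\<Sum>z\<in>F. pn E n x z / real (deg E z) * (\<Sum>y\<in>{y. E z y}. (if y \<in> F then 1 else 0)))"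
  proof (rule swap[OF F])
    fix z assume "pn E n x z / real (deg E z) \<noteq> 0"
    then have "z \<in> Rs x n" using pn_Rs by fastforce
    then show "z \<in> F" using RsF Rs_mono[of n "Suc n" x] by auto
  qed (auto split: if_splits)
  also have "\<dots> = (\<Sum>z\<in>F. pn E n x z)"
  proof (rule sum.cong[OF refl])
    fix z assume "z \<in> F"
    show "pn E n x z / real (deg E z) * (\<Sum>y\<in>{y. E z y}. (if y \<in> F then 1 else 0)) = pn E n x z"
    proof (cases "pn E n x z = 0")
      case True then show ?thesis by simp
    next
      case False
      then have zR: "z \<in> Rs x n" by (rule pn_Rs)
      then have zV: "z \<in> V" using Rs_V[OF x] by auto
      have "(\<Sum>y\<in>{y. E z y}. (if y \<in> F then 1 else 0)) = (\<Sum>y\<in>{y. E z y}. (1::real))"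
        using Rs_nbr[OF zR] RsF by (intro sum.cong) auto
      also have "\<dots> = real (deg E z)" unfolding deg_def by simp
      finally show ?thesis using deg_pos[OF zV] by simp
    qed
  qed
  also have "\<dots> = 1" unfolding F_def using Suc by simp
  finally show ?case unfolding F_def .
qed

lemma cprod:
  assumes x: "x \<in> V"
  shows "a + b \<le> L \<Longrightarrow> (\<Sum>y\<in>Rs x L. pn E a x y * pn E b x y / real (deg E y)) = pn E (a + b) x x / real (deg E x)"
proof (induction a arbitrary: b)
  case 0
  have "x \<in> Rs x L" by (rule Rs_self)
  have "(\<Sum>y\<in>Rs x L. pn E 0 x y * pn E b x y / real (deg E y))
       = (\<Sum>y\<in>Rs x L. if y = x then pn E b x y / real (deg E y) else 0)"
    by (intro sum.cong) auto
  then show ?case using Rs_fin[OF x] \<open>x \<in> Rs x L\<close> by simp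
next
  case (Suc a)
  define F where "F = Rs x L"
  have F: "finite F" unfolding F_def by (rule Rs_fin[OF x])
  have "(\<Sum>y\<in>F. pn E (Suc a) x y * pn E b x y / real (deg E y)) =
        (\<Sum>y\<in>F. pn E b x y / real (deg E y) * (\<Sum>z\<in>{z. E z y}. pn E a x z / real (deg E z)))"
    by (simp add: algebra_simps)
  also have "\<dots> = (\<Sum>z\<in>F. pn E a x z / real (deg E z) * (\<Sum>y\<in>{y. E z y}. pn E b x y / real (deg E y)))"
  proof (rule swap[OF F])
    fix z assume "pn E a x z / real (deg E z) \<noteq> 0"
    then have "z \<in> Rs x a" using pn_Rs by fastforce
    then show "z \<in> F" unfolding F_def using Rs_mono[of a L x] Suc.prems by auto
  next
    fix z assume "pn E b x z / real (deg E z) \<noteq> 0"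
    then have "z \<in> Rs x b" using pn_Rs by fastforce
    then show "z \<in> F" unfolding F_def using Rs_mono[of b L x] Suc.prems by auto
  qed
  also have "\<dots> = (\<Sum>z\<in>F. pn E a x z * pn E (Suc b) x z / real (deg E z))"
    by (simp add: nbr_eq)
  also have "\<dots> = pn E (a + Suc b) x x / real (deg E x)"
    unfolding F_def using Suc.prems by (intro Suc.IH) simp
  finally show ?case unfolding F_def by simp
qed

end

fun epath :: "(nat list \<Rightarrow> nat list \<Rightarrow> bool) \<Rightarrow> nat list list \<Rightarrow> bool" where
  "epath G [] = False"
| "epath G [a] = True"
| "epath G (a # b # r) = (G a b \<and> epath G (b # r))"

lemma epath_suffix: "epath G (us @ vs) \<Longrightarrow> vs \<noteq> [] \<Longrightarrow> epath G vs"
proof (induction us)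
  case Nil then show ?case by simp
next
  case (Cons u us)
  obtain b r where br: "us @ vs = b # r" using Cons.prems(2) by (cases "us @ vs") auto
  then have "epath G (us @ vs)" using Cons.prems(1) by simp
  then show ?case using Cons.IH Cons.prems(2) by simp
qed

lemma num_step:
  fixes e s S k :: real
  assumes "k \<ge> 0" "S \<ge> 0" "s^2 \<le> k * S"
  shows "(e + s)^2 \<le> (k + 1) * (e^2 + S)"
proof (cases "k = 0")
  case True
  then have "s = 0" using assms by simp
  then show ?thesis using True assms by simp
next
  case False
  then have kp: "k > 0" using assms by simp
  have "0 \<le> (k * e - s)^2" by simp
  then have "2 * e * s * k \<le> k^2 * e^2 + s^2" by (simp add: power2_eq_square algebra_simps)
  then have "2 * e * s \<le> k * e^2 + s^2 / k" using kp
    by (simp add: field_simps power2_eq_square)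
  moreover have "s^2 / k \<le> S" using assms kp by (simp add: field_simps)
  ultimately have "2 * e * s \<le> k * e^2 + S" by linarith
  then show ?thesis using assms by (simp add: power2_eq_square algebra_simps)
qed

lemma path_ineq:
  fixes h :: "nat list \<Rightarrow> real"
  shows "epath G p \<Longrightarrow> distinct p \<Longrightarrow>
    (h (hd p) - h (last p))^2 \<le> real (length p - 1) * (\<Sum>e\<in>set (zip p (tl p)). (h (fst e) - h (snd e))^2)"
proof (induction G p rule: epath.induct)
  case (1 G) then show ?case by simp
next
  case (2 G a) then show ?case by simp
next
  case (3 G a b r)
  define S where "S = (\<Sum>e\<in>set (zip (b # r) r). (h (fst e) - h (snd e))^2)"
  have IH: "(h b - h (last (b # r)))^2 \<le> real (length (b # r) - 1) * S"
    using 3 unfolding S_def by simp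
  have notin: "(a, b) \<notin> set (zip (b # r) r)"
    using "3.prems"(2) by (auto dest: set_zip_leftD)
  have eq: "(\<Sum>e\<in>set (zip (a # b # r) (b # r)). (h (fst e) - h (snd e))^2) = (h a - h b)^2 + S"
    unfolding S_def using notin by simp
  have S0: "S \<ge> 0" unfolding S_def by (intro sum_nonneg) simp
  have "(h a - h b + (h b - h (last (b # r))))^2 \<le> (real (length (b # r) - 1) + 1) * ((h a - h b)^2 + S)"
    by (rule num_step) (use IH S0 in auto)
  then show ?case using eq S0 by (cases "r = []") (simp_all add: add.commute)
qed

context TG
begin

lemma Rs_step: "E x z \<Longrightarrow> Rs z k \<subseteq> Rs x (Suc k)"
  unfolding Rs_def by (auto intro: walk.intros)

lemma walk_path: "walk E k x y \<Longrightarrow> \<exists>p. epath E p \<and> hd p = x \<and> last p = y \<and> distinct p \<and> length p \<le> Suc k \<and> set p \<subseteq> Rs x k"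
proof (induction rule: walk.induct)
  case (walk0 x)
  show ?case by (rule exI[of _ "[x]"]) (auto simp: Rs_self)
next
  case (walkS x z k y)
  then obtain p where p: "epath E p" "hd p = z" "last p = y" "distinct p" "length p \<le> Suc k" "set p \<subseteq> Rs z k"
    by blast
  have sub: "set p \<subseteq> Rs x (Suc k)" using p(6) Rs_step[OF walkS.hyps(1)] by blast
  show ?case
  proof (cases "x \<in> set p")
    case True
    then obtain us vs where uv: "p = us @ x # vs" by (meson split_list)
    show ?thesis
    proof (rule exI[of _ "x # vs"], intro conjI)
      show "epath E (x # vs)" using p(1) uv epath_suffix by blast
      show "last (x # vs) = y" using p(3) uv by simp
      show "distinct (x # vs)" using p(4) uv by simp
      show "length (x # vs) \<le> Suc (Suc k)" using p(5) uv by simp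
      show "set (x # vs) \<subseteq> Rs x (Suc k)" using sub uv by auto
    qed simp
  next
    case False
    have "p \<noteq> []" using p(1) by (cases p) auto
    then obtain r where r: "p = z # r" using p(2) by (cases p) auto
    show ?thesis
    proof (rule exI[of _ "x # p"], intro conjI)
      show "epath E (x # p)" using p(1) r walkS.hyps(1) by simp
      show "last (x # p) = y" using p(3) r by simp
      show "distinct (x # p)" using p(4) False by simp
      show "length (x # p) \<le> Suc (Suc k)" using p(5) by simp
      show "set (x # p) \<subseteq> Rs x (Suc k)" using sub Rs_self by auto
    qed simp
  qed
qed

lemma epath_edges: "epath G p \<Longrightarrow> e \<in> set (zip p (tl p)) \<Longrightarrow> G (fst e) (snd e)"
  by (induction G p rule: epath.induct) auto

lemma gdist_walk: "x \<in> V \<Longrightarrow> y \<in> V \<Longrightarrow> walk E (gdist E x y) x y"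
  unfolding gdist_def using conn unfolding connected_graph_def by (meson LeastI_ex)

lemma gdist_le: "walk E k x y \<Longrightarrow> gdist E x y \<le> k"
  unfolding gdist_def by (rule Least_le)

lemma grad:
  fixes h :: "nat list \<Rightarrow> real"
  assumes x: "x \<in> V" and y: "y \<in> V" and L: "gdist E x y \<le> L"
  shows "(h x - h y)^2 \<le> real (gdist E x y) * (\<Sum>a\<in>Rs x L. \<Sum>b\<in>{b. E a b}. (h a - h b)^2)"
proof -
  obtain p where p: "epath E p" "hd p = x" "last p = y" "distinct p" "length p \<le> Suc (gdist E x y)"
    "set p \<subseteq> Rs x (gdist E x y)"
    using walk_path[OF gdist_walk[OF x y]] by blast
  have "(h x - h y)^2 \<le> real (length p - 1) * (\<Sum>e\<in>set (zip p (tl p)). (h (fst e) - h (snd e))^2)"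
    using path_ineq[OF p(1) p(4), of h] p(2,3) by simp
  also have "\<dots> \<le> real (gdist E x y) * (\<Sum>e\<in>set (zip p (tl p)). (h (fst e) - h (snd e))^2)"
    using p(5) by (intro mult_right_mono sum_nonneg) auto
  also have "(\<Sum>e\<in>set (zip p (tl p)). (h (fst e) - h (snd e))^2) \<le> (\<Sum>e\<in>Sigma (Rs x L) (\<lambda>a. {b. E a b}). (h (fst e) - h (snd e))^2)"
  proof (rule sum_mono2)
    show "finite (Sigma (Rs x L) (\<lambda>a. {b. E a b}))"
      using Rs_fin[OF x] nbr_fin by (intro finite_SigmaI) auto
    show "set (zip p (tl p)) \<subseteq> Sigma (Rs x L) (\<lambda>a. {b. E a b})"
    proof
      fix e assume e: "e \<in> set (zip p (tl p))"
      then have "fst e \<in> set p" using set_zip_leftD[of "fst e" "snd e" p "tl p"] by simp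
      then have "fst e \<in> Rs x L" using p(6) Rs_mono[OF L] by auto
      moreover have "E (fst e) (snd e)" using epath_edges[OF p(1) e] .
      ultimately show "e \<in> Sigma (Rs x L) (\<lambda>a. {b. E a b})" by (cases e) auto
    qed
  qed simp
  also have "(\<Sum>e\<in>Sigma (Rs x L) (\<lambda>a. {b. E a b}). (h (fst e) - h (snd e))^2) = (\<Sum>a\<in>Rs x L. \<Sum>b\<in>{b. E a b}. (h a - h b)^2)"
    using Rs_fin[OF x] nbr_fin by (subst sum.Sigma) (auto simp: case_prod_beta)
  finally show ?thesis by (simp add: mult_left_mono)
qed

end

context TG
begin

definition hf :: "nat list \<Rightarrow> nat \<Rightarrow> nat list \<Rightarrow> real" where
  "hf x i y = (pn E i x y + pn E (Suc i) x y) / real (deg E y)"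

definition ww :: "nat list \<Rightarrow> nat \<Rightarrow> real" where
  "ww x k = pn E k x x / real (deg E x)"

definition av :: "nat list \<Rightarrow> nat \<Rightarrow> real" where
  "av x k = ww x k + ww x (Suc k)"

lemma hf_supp: "hf x i y \<noteq> 0 \<Longrightarrow> y \<in> Rs x (Suc i)"
proof -
  assume "hf x i y \<noteq> 0"
  then have "pn E i x y \<noteq> 0 \<or> pn E (Suc i) x y \<noteq> 0" unfolding hf_def by auto
  then show ?thesis using pn_Rs Rs_mono[of i "Suc i" x] by auto
qed

lemma sq_expand:
  fixes d p q :: real
  shows "d * ((p + q) / d)^2 = p * p / d + 2 * (p * q / d) + q * q / d"
  by (cases "d = 0") (simp_all add: field_simps power2_eq_square)

lemma dir:
  assumes x: "x \<in> V" and L: "2 * i + 4 \<le> L"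
  shows "(\<Sum>a\<in>Rs x L. \<Sum>b\<in>{b. E a b}. (hf x i a - hf x i b)^2) = 2 * (av x (2 * i) - av x (2 * i + 2))"
proof -
  define h where "h = hf x i"
  define F where "F = Rs x L"
  have F: "finite F" unfolding F_def by (rule Rs_fin[OF x])
  define S where "S a b = (\<Sum>y\<in>F. pn E a x y * pn E b x y / real (deg E y))" for a b
  have Sw: "S a b = ww x (a + b)" if "a + b \<le> L" for a b
    unfolding S_def F_def ww_def using cprod[OF x that] .
  have e1: "(\<Sum>b\<in>{b. E a b}. (h a - h b)^2) =
      real (deg E a) * (h a)^2 - 2 * (h a * (\<Sum>b\<in>{b. E a b}. h b)) + (\<Sum>b\<in>{b. E a b}. (h b)^2)" for a
  proof -
    have "(\<Sum>b\<in>{b. E a b}. (h a - h b)^2) = (\<Sum>b\<in>{b. E a b}. (h a)^2 - 2 * (h a * h b) + (h b)^2)"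
      by (intro sum.cong) (auto simp: power2_eq_square algebra_simps)
    also have "\<dots> = real (deg E a) * (h a)^2 - 2 * (h a * (\<Sum>b\<in>{b. E a b}. h b)) + (\<Sum>b\<in>{b. E a b}. (h b)^2)"
      by (simp add: sum.distrib sum_subtractf sum_distrib_left deg_def)
    finally show ?thesis .
  qed
  have sN: "(\<Sum>b\<in>{b. E a b}. h b) = pn E (Suc i) x a + pn E (Suc (Suc i)) x a" for a
  proof -
    have "(\<Sum>b\<in>{b. E a b}. h b) = (\<Sum>b\<in>{b. E b a}. pn E i x b / real (deg E b) + pn E (Suc i) x b / real (deg E b))"
      unfolding h_def hf_def nbr_eq by (simp add: add_divide_distrib)
    also have "\<dots> = pn E (Suc i) x a + pn E (Suc (Suc i)) x a"
      by (simp add: sum.distrib)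
    finally show ?thesis .
  qed
  have T3: "(\<Sum>a\<in>F. \<Sum>b\<in>{b. E a b}. (h b)^2) = (\<Sum>a\<in>F. real (deg E a) * (h a)^2)"
  proof -
    have "(\<Sum>a\<in>F. \<Sum>b\<in>{b. E a b}. (h b)^2) = (\<Sum>a\<in>F. (if a \<in> F then 1 else 0) * (\<Sum>b\<in>{b. E b a}. (h b)^2))"
      by (simp add: nbr_eq)
    also have "\<dots> = (\<Sum>b\<in>F. (h b)^2 * (\<Sum>a\<in>{a. E b a}. (if a \<in> F then 1 else 0)))"
    proof (rule swap[OF F])
      fix z assume "(h z)^2 \<noteq> 0"
      then have "z \<in> Rs x (Suc i)" using hf_supp unfolding h_def by auto
      then show "z \<in> F" unfolding F_def using Rs_mono[of "Suc i" L x] L by auto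
    qed (auto split: if_splits)
    also have "\<dots> = (\<Sum>a\<in>F. real (deg E a) * (h a)^2)"
    proof (rule sum.cong[OF refl])
      fix b assume "b \<in> F"
      show "(h b)^2 * (\<Sum>a\<in>{a. E b a}. (if a \<in> F then 1 else 0)) = real (deg E b) * (h b)^2"
      proof (cases "h b = 0")
        case True then show ?thesis by simp
      next
        case False
        then have bR: "b \<in> Rs x (Suc i)" using hf_supp unfolding h_def by auto
        have "(\<Sum>a\<in>{a. E b a}. (if a \<in> F then 1 else 0)) = (\<Sum>a\<in>{a. E b a}. (1::real))"
        proof (intro sum.cong refl)
          fix a assume "a \<in> {a. E b a}"
          then have "a \<in> Rs x (Suc (Suc i))" using Rs_nbr[OF bR] by auto
          then have "a \<in> F" unfolding F_def using Rs_mono[of "Suc (Suc i)" L x] L by auto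
          then show "(if a \<in> F then 1 else 0) = (1::real)" by simp
        qed
        then show ?thesis by (simp add: deg_def)
      qed
    qed
    finally show ?thesis .
  qed
  have A: "(\<Sum>a\<in>F. real (deg E a) * (h a)^2) = S i i + 2 * S i (Suc i) + S (Suc i) (Suc i)"
    unfolding S_def h_def hf_def sq_expand by (simp add: sum.distrib sum_distrib_left)
  have B: "(\<Sum>a\<in>F. h a * (pn E (Suc i) x a + pn E (Suc (Suc i)) x a)) =
     S i (Suc i) + S i (Suc (Suc i)) + S (Suc i) (Suc i) + S (Suc i) (Suc (Suc i))"
    unfolding S_def h_def hf_def
    by (simp add: sum.distrib add_divide_distrib distrib_left distrib_right)
  have "(\<Sum>a\<in>F. \<Sum>b\<in>{b. E a b}. (h a - h b)^2) =
      (\<Sum>a\<in>F. real (deg E a) * (h a)^2) - 2 * (\<Sum>a\<in>F. h a * (pn E (Suc i) x a + pn E (Suc (Suc i)) x a))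
      + (\<Sum>a\<in>F. \<Sum>b\<in>{b. E a b}. (h b)^2)"
    unfolding e1 sN by (simp add: sum.distrib sum_subtractf sum_distrib_left)
  also have "\<dots> = 2 * (S i i + 2 * S i (Suc i) + S (Suc i) (Suc i)) - 2 * (S i (Suc i) + S i (Suc (Suc i)) + S (Suc i) (Suc i) + S (Suc i) (Suc (Suc i)))"
    unfolding T3 A B by simp
  also have "\<dots> = 2 * (ww x (i + i) + ww x (Suc (i + i)) - ww x (Suc (Suc (i + i))) - ww x (Suc (Suc (Suc (i + i)))))"
    using L by (simp add: Sw)
  also have "\<dots> = 2 * (av x (2 * i) - av x (2 * i + 2))"
    unfolding av_def mult_2 by simp
  finally show ?thesis unfolding h_def F_def .
qed

end

lemma sqrt_trick:
  fixes b A K :: real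
  assumes b0: "b \<ge> 0" and A0: "A \<ge> 0" and K0: "K \<ge> 0" and le: "b \<le> A + sqrt (K * b)"
  shows "b \<le> max (2 * A) (4 * K)"
proof (cases "b \<le> 2 * A")
  case True then show ?thesis by simp
next
  case False
  then have bp: "b > 0" using A0 by simp
  have "b / 2 < sqrt (K * b)" using False le by simp
  then have "(b / 2)^2 < (sqrt (K * b))^2"
    using bp by (intro power_strict_mono) auto
  also have "\<dots> = K * b" using K0 b0 by simp
  finally have "b * b < 4 * K * b" by (simp add: power2_eq_square field_simps)
  then have "b < 4 * K" using bp by simp
  then show ?thesis by simp
qed

lemma nat_ceil_le: "real g \<le> (r::real) \<Longrightarrow> g \<le> nat \<lceil>r\<rceil>"
proof -
  assume a: "real g \<le> r"
  have "real g \<le> of_int \<lceil>r\<rceil>" using a le_of_int_ceiling[of r] by linarith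
  then have "of_int (int g) \<le> (of_int \<lceil>r\<rceil> :: real)" by simp
  then have "int g \<le> \<lceil>r\<rceil>" by (simp only: of_int_le_iff)
  then show ?thesis by simp
qed

context TG
begin

definition bb :: "nat list \<Rightarrow> nat \<Rightarrow> real" where
  "bb x j = av x (2 * j)"

lemma ww_nonneg: "ww x k \<ge> 0"
  unfolding ww_def using pn_nonneg by simp

lemma bb_nonneg: "bb x j \<ge> 0"
  unfolding bb_def av_def using ww_nonneg by (simp add: add_nonneg_nonneg)

lemma bb_Suc: assumes x: "x \<in> V" shows "bb x (Suc j) \<le> bb x j"
proof -
  have "0 \<le> (\<Sum>a\<in>Rs x (2 * j + 4). \<Sum>b\<in>{b. E a b}. (hf x j a - hf x j b)^2)"
    by (intro sum_nonneg) simp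
  also have "\<dots> = 2 * (av x (2 * j) - av x (2 * j + 2))" by (rule dir[OF x]) simp
  finally show ?thesis unfolding bb_def by simp
qed

lemma bb_anti: assumes x: "x \<in> V" shows "j \<le> n \<Longrightarrow> bb x n \<le> bb x j"
proof (induction n)
  case 0 then show ?case by simp
next
  case (Suc n)
  show ?case
  proof (cases "j = Suc n")
    case True then show ?thesis by simp
  next
    case False
    then have "j \<le> n" using Suc.prems by simp
    then show ?thesis using Suc.IH bb_Suc[OF x, of n] by simp
  qed
qed

lemma ball_sub: "x \<in> V \<Longrightarrow> ball V E x r \<subseteq> Rs x (nat \<lceil>r\<rceil>)"
proof
  fix y assume x: "x \<in> V" and y: "y \<in> ball V E x r"
  then have yV: "y \<in> V" and g: "real (gdist E x y) \<le> r" unfolding ball_def by auto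
  have "walk E (gdist E x y) x y" by (rule gdist_walk[OF x yV])
  then show "y \<in> Rs x (nat \<lceil>r\<rceil>)" unfolding Rs_def using nat_ceil_le[OF g] by blast
qed

lemma ball_fin: "x \<in> V \<Longrightarrow> finite (ball V E x r)"
  using ball_sub Rs_fin finite_subset by blast

lemma ball_self: "x \<in> V \<Longrightarrow> r \<ge> 0 \<Longrightarrow> x \<in> ball V E x r"
proof -
  assume x: "x \<in> V" and r: "r \<ge> 0"
  have "gdist E x x \<le> 0" by (rule gdist_le) (rule walk0)
  then show ?thesis unfolding ball_def using x r by simp
qed

lemma sum_ball_le1: assumes x: "x \<in> V" shows "(\<Sum>y\<in>ball V E x r. pn E k x y) \<le> 1"
proof -
  have "(\<Sum>y\<in>ball V E x r. pn E k x y) \<le> (\<Sum>y\<in>ball V E x r \<union> Rs x k. pn E k x y)"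
    using ball_fin[OF x] Rs_fin[OF x] pn_nonneg by (intro sum_mono2) auto
  also have "\<dots> = (\<Sum>y\<in>Rs x k. pn E k x y)"
    by (rule sum.mono_neutral_right) (use ball_fin[OF x] Rs_fin[OF x] pn_Rs in blast)+
  also have "\<dots> = 1" by (rule stoch[OF x]) simp
  finally show ?thesis .
qed

lemma key_j:
  assumes x: "x \<in> V" and rho: "rho \<ge> 0" and vp: "vol V E x rho > 0"
  shows "bb x j \<le> 2 / vol V E x rho + sqrt (rho * (2 * (bb x (2 * j) - bb x (2 * j + 1))))"
proof -
  define i where "i = 2 * j"
  define h where "h = hf x i"
  define B where "B = ball V E x rho"
  define v where "v = vol V E x rho"
  have B: "finite B" unfolding B_def by (rule ball_fin[OF x])
  have BV: "B \<subseteq> V" unfolding B_def ball_def by auto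
  have vB: "v = (\<Sum>y\<in>B. real (deg E y))" unfolding v_def B_def vol_def by simp
  have vp': "v > 0" using vp unfolding v_def .
  have sumB: "(\<Sum>y\<in>B. real (deg E y) * h y) \<le> 2"
  proof -
    have "(\<Sum>y\<in>B. real (deg E y) * h y) = (\<Sum>y\<in>B. pn E i x y) + (\<Sum>y\<in>B. pn E (Suc i) x y)"
    proof -
      have "(\<Sum>y\<in>B. real (deg E y) * h y) = (\<Sum>y\<in>B. pn E i x y + pn E (Suc i) x y)"
      proof (rule sum.cong[OF refl])
        fix y assume "y \<in> B"
        then have "deg E y > 0" using BV deg_pos by auto
        then show "real (deg E y) * h y = pn E i x y + pn E (Suc i) x y"
          unfolding h_def hf_def by simp
      qed
      then show ?thesis by (simp add: sum.distrib)
    qed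
    also have "\<dots> \<le> 1 + 1" unfolding B_def
      by (intro add_mono sum_ball_le1[OF x])
    finally show ?thesis by simp
  qed
  obtain y where yB: "y \<in> B" and hy: "h y \<le> 2 / v"
  proof (rule ccontr)
    assume "\<not> thesis"
    then have all: "\<forall>y\<in>B. h y > 2 / v" using that by force
    have "x \<in> B" unfolding B_def by (rule ball_self[OF x rho])
    then have "B \<noteq> {}" by auto
    then have "(\<Sum>y\<in>B. real (deg E y) * (2 / v)) < (\<Sum>y\<in>B. real (deg E y) * h y)"
    proof (intro sum_strict_mono[OF B])
      fix y assume "y \<in> B"
      then have "real (deg E y) > 0" using BV deg_pos by auto
      then show "real (deg E y) * (2 / v) < real (deg E y) * h y"
        by (rule mult_strict_left_mono[rotated]) (use all \<open>y \<in> B\<close> in auto)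
    qed
    also have "\<dots> \<le> 2" by (rule sumB)
    finally have lt: "(\<Sum>y\<in>B. real (deg E y) * (2 / v)) < 2" .
    have "(\<Sum>y\<in>B. real (deg E y) * (2 / v)) = (\<Sum>y\<in>B. real (deg E y)) * (2 / v)"
      by (rule sum_distrib_right[symmetric])
    also have "\<dots> = 2" using vB vp' by simp
    finally show False using lt by simp
  qed
  have yV: "y \<in> V" using yB BV by auto
  have gy: "real (gdist E x y) \<le> rho" using yB unfolding B_def ball_def by simp
  define L where "L = 2 * i + 4 + nat \<lceil>rho\<rceil>"
  have gL: "gdist E x y \<le> L" using nat_ceil_le[OF gy] unfolding L_def by simp
  have D: "(\<Sum>a\<in>Rs x L. \<Sum>b\<in>{b. E a b}. (h a - h b)^2) = 2 * (bb x (2 * j) - bb x (2 * j + 1))"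
    unfolding h_def using dir[OF x, of i L] unfolding L_def bb_def i_def by (simp add: algebra_simps)
  have D0: "0 \<le> 2 * (bb x (2 * j) - bb x (2 * j + 1))" using bb_Suc[OF x, of "2*j"] by simp
  have "(h x - h y)^2 \<le> real (gdist E x y) * (2 * (bb x (2 * j) - bb x (2 * j + 1)))"
    using grad[OF x yV gL, of h] D by simp
  also have "\<dots> \<le> rho * (2 * (bb x (2 * j) - bb x (2 * j + 1)))"
    using gy D0 by (intro mult_right_mono) auto
  finally have "\<bar>h x - h y\<bar> \<le> sqrt (rho * (2 * (bb x (2 * j) - bb x (2 * j + 1))))"
    using real_sqrt_le_mono real_sqrt_abs by metis
  moreover have "h x = bb x j"
    unfolding h_def hf_def bb_def av_def ww_def i_def by (simp add: add_divide_distrib)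
  ultimately show ?thesis using hy unfolding v_def by linarith
qed

lemma bb_bound:
  assumes x: "x \<in> V" and rho: "rho \<ge> 0" and vp: "vol V E x rho > 0" and m: "m \<ge> 1" and n: "2 * m \<le> n"
  shows "bb x n \<le> max (4 / vol V E x rho) (8 * rho / real m)"
proof -
  define f where "f j = bb x (2 * j) - bb x (2 * j + 1)" for j
  have "\<exists>j\<in>{m..<2*m}. f j \<le> bb x (2 * m) / real m"
  proof (rule ccontr)
    assume "\<not> ?thesis"
    then have all: "\<forall>j\<in>{m..<2*m}. bb x (2 * m) / real m < f j" by auto
    have ne: "{m..<2*m} \<noteq> {}" using m by auto
    have "(\<Sum>j\<in>{m..<2*m}. bb x (2 * m) / real m) < (\<Sum>j\<in>{m..<2*m}. f j)"
      using all ne by (intro sum_strict_mono) auto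
    also have "\<dots> \<le> (\<Sum>j\<in>{m..<2*m}. bb x (2 * j) - bb x (2 * Suc j))"
      unfolding f_def using bb_Suc[OF x] by (intro sum_mono) (simp add: algebra_simps)
    also have "\<dots> = bb x (2 * m) - bb x (2 * (2 * m))"
      using sum_Suc_diff'[of m "2*m" "\<lambda>j. - bb x (2 * j)"] by simp
    also have "\<dots> \<le> bb x (2 * m)" using bb_nonneg by simp
    finally show False using m by simp
  qed
  then obtain j where j: "m \<le> j" "j < 2 * m" and fj: "f j \<le> bb x (2 * m) / real m" by auto
  have "bb x (2 * m) \<le> bb x j" using bb_anti[OF x] j by simp
  then have fj': "f j \<le> bb x j / real m" using fj m by (simp add: divide_right_mono order_trans)
  have "bb x j \<le> 2 / vol V E x rho + sqrt (rho * (2 * f j))"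
    using key_j[OF x rho vp, of j] unfolding f_def .
  also have "sqrt (rho * (2 * f j)) \<le> sqrt ((2 * rho / real m) * bb x j)"
    using fj' rho m by (intro real_sqrt_le_mono) (simp add: field_simps mult_left_mono)
  finally have "bb x j \<le> 2 / vol V E x rho + sqrt ((2 * rho / real m) * bb x j)" by simp
  then have "bb x j \<le> max (2 * (2 / vol V E x rho)) (4 * (2 * rho / real m))"
    using vp rho m bb_nonneg by (intro sqrt_trick) auto
  moreover have "bb x n \<le> bb x j" using bb_anti[OF x] j n by simp
  ultimately show ?thesis by simp
qed

end

lemma sR: "(x::real) /\<^sub>R fact n = x / fact n"
  by (simp add: divide_inverse_commute)

lemma poisson_sums: "(\<lambda>n. exp (- t) * t ^ n / fact n) sums (1::real)"
proof -
  have "(\<lambda>n. t ^ n / fact n) sums exp t" using exp_converges[of t] by (simp only: sR)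
  then have "(\<lambda>n. exp (- t) * (t ^ n / fact n)) sums (exp (- t) * exp t)" by (rule sums_mult)
  moreover have "exp (- t) * exp t = 1" by (simp add: exp_minus_inverse mult.commute)
  ultimately show ?thesis by simp
qed

lemma poisson_tail:
  fixes t :: real
  assumes t: "t \<ge> 2 * (real k + 1)"
  shows "(\<Sum>n<k. exp (- t) * t ^ n / fact n) \<le> 1 / 2"
proof -
  have t0: "t \<ge> 0" using t by simp
  have "(\<Sum>n<k. t ^ n / fact n) \<le> (\<Sum>n<k. 2 ^ k * ((t / 2) ^ n / fact n))"
  proof (intro sum_mono)
    fix n assume "n \<in> {..<k}"
    then have "(2::real) ^ n \<le> 2 ^ k" by (intro power_increasing) auto
    then have "2 ^ n * (t / 2) ^ n \<le> 2 ^ k * (t / 2) ^ n" using t0 by (intro mult_right_mono) auto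
    moreover have "t ^ n = 2 ^ n * (t / 2) ^ n"
    proof -
      have "t ^ n = (2 * (t / 2)) ^ n" by simp
      also have "\<dots> = 2 ^ n * (t / 2) ^ n" by (rule power_mult_distrib)
      finally show ?thesis .
    qed
    ultimately have "t ^ n \<le> 2 ^ k * (t / 2) ^ n" by simp
    then have "t ^ n / fact n \<le> (2 ^ k * (t / 2) ^ n) / fact n"
      by (rule divide_right_mono) simp
    then show "t ^ n / fact n \<le> 2 ^ k * ((t / 2) ^ n / fact n)" by simp
  qed
  also have "\<dots> = 2 ^ k * (\<Sum>n<k. (t / 2) ^ n / fact n)" by (rule sum_distrib_left[symmetric])
  also have "(\<Sum>n<k. (t / 2) ^ n / fact n) \<le> exp (t / 2)"
  proof -
    have s: "(\<lambda>n. (t / 2) ^ n / fact n) sums exp (t / 2)"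
      using exp_converges[of "t / 2"] by (simp only: sR)
    have "(\<Sum>n<k. (t / 2) ^ n / fact n) \<le> suminf (\<lambda>n. (t / 2) ^ n / fact n)"
      using s t0 by (intro sum_le_suminf) (auto simp: sums_summable)
    then show ?thesis using s sums_unique by metis
  qed
  finally have A: "(\<Sum>n<k. t ^ n / fact n) \<le> 2 ^ k * exp (t / 2)" by (simp add: mult_left_mono)
  have "(\<Sum>n<k. exp (- t) * t ^ n / fact n) = exp (- t) * (\<Sum>n<k. t ^ n / fact n)"
    by (simp add: sum_distrib_left)
  also have "\<dots> \<le> exp (- t) * (2 ^ k * exp (t / 2))" using A by (intro mult_left_mono) auto
  also have "\<dots> = 2 ^ k / exp (t / 2)"
  proof -
    have "exp (- t) * exp (t / 2) = 1 / exp (t / 2)"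
      by (simp add: exp_add[symmetric] exp_minus field_simps)
    then show ?thesis by (simp add: field_simps)
  qed
  also have "\<dots> \<le> 1 / 2"
  proof -
    have e1: "(2::real) \<le> exp 1" using exp_ge_add_one_self[of 1] by simp
    have "(2::real) ^ (Suc k) \<le> exp 1 ^ (Suc k)" by (rule power_mono[OF e1]) simp
    also have "\<dots> = exp (real (Suc k) * 1)" by (rule exp_of_nat_mult[symmetric])
    also have "\<dots> \<le> exp (t / 2)" using t by simp
    finally have "2 * 2 ^ k \<le> exp (t / 2)" by simp
    then show ?thesis by (simp add: field_simps)
  qed
  finally show ?thesis .
qed

context TG
begin

lemma P_ball:
  assumes x: "x \<in> V"
  shows "(\<Sum>y\<in>ball V E x R. pn E n x y)^2 \<le> vol V E x R * bb x n"
proof -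
  define B where "B = ball V E x R"
  have B: "finite B" unfolding B_def by (rule ball_fin[OF x])
  have BV: "B \<subseteq> V" unfolding B_def ball_def by auto
  have "(\<Sum>y\<in>B. pn E n x y) = (\<Sum>y\<in>B. sqrt (real (deg E y)) * (pn E n x y / sqrt (real (deg E y))))"
  proof (rule sum.cong[OF refl])
    fix y assume "y \<in> B"
    then have "real (deg E y) > 0" using BV deg_pos by auto
    then show "pn E n x y = sqrt (real (deg E y)) * (pn E n x y / sqrt (real (deg E y)))" by simp
  qed
  then have "(\<Sum>y\<in>B. pn E n x y)^2 \<le> (\<Sum>y\<in>B. (sqrt (real (deg E y)))^2) * (\<Sum>y\<in>B. (pn E n x y / sqrt (real (deg E y)))^2)"
    using Cauchy_Schwarz_ineq_sum by metis
  also have "(\<Sum>y\<in>B. (sqrt (real (deg E y)))^2) = vol V E x R"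
    unfolding B_def vol_def by simp
  also have "(\<Sum>y\<in>B. (pn E n x y / sqrt (real (deg E y)))^2) = (\<Sum>y\<in>B. pn E n x y * pn E n x y / real (deg E y))"
    by (intro sum.cong refl) (simp add: power_divide power2_eq_square)
  also have "\<dots> \<le> (\<Sum>y\<in>B \<union> Rs x (n + n). pn E n x y * pn E n x y / real (deg E y))"
    using B Rs_fin[OF x] pn_nonneg by (intro sum_mono2) auto
  also have "\<dots> = (\<Sum>y\<in>Rs x (n + n). pn E n x y * pn E n x y / real (deg E y))"
  proof (rule sum.mono_neutral_right)
    show "finite (B \<union> Rs x (n + n))" using B Rs_fin[OF x] by auto
    show "\<forall>i\<in>B \<union> Rs x (n + n) - Rs x (n + n). pn E n x i * pn E n x i / real (deg E i) = 0"
      using pn_Rs Rs_mono[of n "n+n" x] by fastforce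
  qed auto
  also have "\<dots> = ww x (n + n)" unfolding ww_def by (rule cprod[OF x]) simp
  also have "\<dots> \<le> bb x n" unfolding bb_def av_def using ww_nonneg by (simp add: mult_2)
  finally show ?thesis using ww_nonneg
    by (simp add: mult_left_mono vol_def sum_nonneg B_def)
qed

lemma sum_balln: assumes x: "x \<in> V" shows "(\<Sum>y\<in>ball V E x (real n). pn E n x y) = 1"
proof -
  have "(\<Sum>y\<in>ball V E x (real n). pn E n x y) = (\<Sum>y\<in>Rs x n. pn E n x y)"
  proof (rule sum_supp[OF ball_fin[OF x] Rs_fin[OF x]])
    fix y assume "pn E n x y \<noteq> 0"
    then have w: "walk E n x y" by (rule pn_supp)
    then have "y \<in> V" using walk_V x by blast
    moreover have "gdist E x y \<le> n" by (rule gdist_le[OF w])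
    ultimately show "y \<in> ball V E x (real n) \<and> y \<in> Rs x n"
      unfolding ball_def Rs_def using w by auto
  qed
  also have "\<dots> = 1" by (rule stoch[OF x]) simp
  finally show ?thesis .
qed

lemma Dn_lower:
  assumes x: "x \<in> V" and R: "R \<ge> 0"
  shows "(\<Sum>y\<in>ball V E x (real n). pn E n x y * real (gdist E x y)) \<ge> R * (1 - (\<Sum>y\<in>ball V E x R. pn E n x y))"
proof -
  define Bn where "Bn = ball V E x (real n)"
  define BR where "BR = ball V E x R"
  have Bn: "finite Bn" unfolding Bn_def by (rule ball_fin[OF x])
  have BR: "finite BR" unfolding BR_def by (rule ball_fin[OF x])
  have "(\<Sum>y\<in>Bn. pn E n x y * real (gdist E x y)) \<ge> (\<Sum>y\<in>Bn - BR. pn E n x y * real (gdist E x y))"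
    using Bn pn_nonneg by (intro sum_mono2) (auto intro: mult_nonneg_nonneg)
  moreover have "(\<Sum>y\<in>Bn - BR. pn E n x y * real (gdist E x y)) \<ge> (\<Sum>y\<in>Bn - BR. pn E n x y * R)"
  proof (intro sum_mono)
    fix y assume "y \<in> Bn - BR"
    then have "real (gdist E x y) > R" unfolding Bn_def BR_def ball_def by auto
    then show "pn E n x y * R \<le> pn E n x y * real (gdist E x y)"
      using pn_nonneg by (intro mult_left_mono) auto
  qed
  moreover have "(\<Sum>y\<in>Bn - BR. pn E n x y * R) = R * ((\<Sum>y\<in>Bn. pn E n x y) - (\<Sum>y\<in>Bn \<inter> BR. pn E n x y))"
  proof -
    have "Bn - BR = Bn - (Bn \<inter> BR)" by auto
    then have "(\<Sum>y\<in>Bn - BR. pn E n x y) = (\<Sum>y\<in>Bn. pn E n x y) - (\<Sum>y\<in>Bn \<inter> BR. pn E n x y)"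
      using Bn by (simp add: sum_diff)
    moreover have "(\<Sum>y\<in>Bn - BR. pn E n x y * R) = (\<Sum>y\<in>Bn - BR. pn E n x y) * R"
      by (rule sum_distrib_right[symmetric])
    ultimately show ?thesis by simp
  qed
  moreover have "(\<Sum>y\<in>Bn \<inter> BR. pn E n x y) \<le> (\<Sum>y\<in>BR. pn E n x y)"
    using BR pn_nonneg by (intro sum_mono2) auto
  moreover have "(\<Sum>y\<in>Bn. pn E n x y) = 1" unfolding Bn_def by (rule sum_balln[OF x])
  ultimately have "(\<Sum>y\<in>Bn. pn E n x y * real (gdist E x y)) \<ge> R * (1 - (\<Sum>y\<in>BR. pn E n x y))"
    using R by (smt (verit, ccfv_SIG) mult_left_mono)
  then show ?thesis unfolding Bn_def BR_def .
qed

lemma Dn_upper: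
  assumes x: "x \<in> V"
  shows "(\<Sum>y\<in>ball V E x (real n). pn E n x y * real (gdist E x y)) \<le> real n"
proof -
  have "(\<Sum>y\<in>ball V E x (real n). pn E n x y * real (gdist E x y)) \<le> (\<Sum>y\<in>ball V E x (real n). pn E n x y * real n)"
    using pn_nonneg by (intro sum_mono mult_left_mono) (auto simp: ball_def)
  also have "\<dots> = real n" using sum_balln[OF x] by (simp add: sum_distrib_right[symmetric])
  finally show ?thesis .
qed

lemma Dn_nonneg: "(\<Sum>y\<in>ball V E x (real n). pn E n x y * real (gdist E x y)) \<ge> 0"
  using pn_nonneg by (intro sum_nonneg) auto

lemma core:
  assumes x: "x \<in> V" and rho: "rho \<ge> 0" and vp: "vol V E x rho > 0" and R: "R \<ge> 0"
    and m: "m \<ge> 1" and small: "vol V E x R * max (4 / vol V E x rho) (8 * rho / real m) \<le> 1 / 4"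
    and t: "t \<ge> 2 * (real (2 * m) + 1)"
  shows "exp_dist V E x t \<ge> R / 4"
proof -
  define k where "k = 2 * m"
  define D where "D n = (\<Sum>y\<in>ball V E x (real n). pn E n x y * real (gdist E x y))" for n
  define \<pi> where "\<pi> n = exp (- t) * t ^ n / fact n" for n
  have t0: "t \<ge> 0" using t by simp
  have pi0: "\<pi> n \<ge> 0" for n unfolding \<pi>_def using t0 by simp
  have Dk: "D n \<ge> R / 2" if "k \<le> n" for n
  proof -
    define P where "P = (\<Sum>y\<in>ball V E x R. pn E n x y)"
    have P0: "P \<ge> 0" unfolding P_def using pn_nonneg by (intro sum_nonneg) auto
    have "P^2 \<le> vol V E x R * bb x n" unfolding P_def by (rule P_ball[OF x])
    also have "\<dots> \<le> vol V E x R * max (4 / vol V E x rho) (8 * rho / real m)"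
    proof (rule mult_left_mono)
      show "bb x n \<le> max (4 / vol V E x rho) (8 * rho / real m)"
        using bb_bound[OF x rho vp m] that unfolding k_def by simp
      show "0 \<le> vol V E x R" unfolding vol_def by (intro sum_nonneg) auto
    qed
    also have "\<dots> \<le> 1 / 4" by (rule small)
    finally have "P^2 \<le> 1/4" .
    then have "P \<le> 1 / 2"
    proof -
      assume "P^2 \<le> 1/4"
      show "P \<le> 1/2"
      proof (rule ccontr)
        assume "\<not> P \<le> 1/2"
        then have "(1/2)^2 < P^2" by (intro power_strict_mono) auto
        then show False using \<open>P^2 \<le> 1/4\<close> by (simp add: power2_eq_square)
      qed
    qed
    moreover have "D n \<ge> R * (1 - P)" unfolding D_def P_def by (rule Dn_lower[OF x R])
    moreover have "R * (1/2) \<le> R * (1 - P)" using R \<open>P \<le> 1/2\<close> by (intro mult_left_mono) auto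
    ultimately show ?thesis by linarith
  qed
  define f where "f n = \<pi> n * D n" for n
  define g where "g n = \<pi> n * (if k \<le> n then R / 2 else 0)" for n
  have "exp_dist V E x t = suminf f"
    unfolding exp_dist_def f_def \<pi>_def D_def by simp
  have sumf: "summable f"
  proof (rule summable_comparison_test)
    show "\<exists>N. \<forall>n\<ge>N. norm (f n) \<le> exp (- t) * ((2 * t) ^ n / fact n)"
    proof (intro exI allI impI)
      fix n :: nat
      have "norm (f n) = \<pi> n * D n" unfolding f_def using pi0 Dn_nonneg D_def by simp
      also have "\<dots> \<le> \<pi> n * real n" using Dn_upper[OF x] pi0 unfolding D_def by (intro mult_left_mono) auto
      also have "\<dots> \<le> \<pi> n * 2 ^ n" using pi0 by (intro mult_left_mono) (auto intro: less_imp_le)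
      also have "\<dots> = exp (- t) * ((2 * t) ^ n / fact n)" unfolding \<pi>_def by (simp add: power_mult_distrib)
      finally show "norm (f n) \<le> exp (- t) * ((2 * t) ^ n / fact n)" .
    qed
    show "summable (\<lambda>n. exp (- t) * ((2 * t) ^ n / fact n))"
    proof -
      have "(\<lambda>n. (2 * t) ^ n / fact n) sums exp (2 * t)" using exp_converges[of "2 * t"] by (simp only: sR)
      then show ?thesis by (intro summable_mult) (rule sums_summable)
    qed
  qed
  have gs: "g sums (R / 2 * 1 - (\<Sum>n\<in>{..<k}. R / 2 * \<pi> n))"
  proof -
    have a: "(\<lambda>n. R / 2 * \<pi> n) sums (R / 2 * 1)"
      unfolding \<pi>_def by (intro sums_mult poisson_sums)
    have b: "(\<lambda>n. if n \<in> {..<k} then R / 2 * \<pi> n else 0) sums (\<Sum>n\<in>{..<k}. R / 2 * \<pi> n)"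
      by (rule sums_If_finite_set) simp
    have "(\<lambda>n. R / 2 * \<pi> n - (if n \<in> {..<k} then R / 2 * \<pi> n else 0)) sums (R / 2 * 1 - (\<Sum>n\<in>{..<k}. R / 2 * \<pi> n))"
      by (rule sums_diff[OF a b])
    moreover have "(\<lambda>n. R / 2 * \<pi> n - (if n \<in> {..<k} then R / 2 * \<pi> n else 0)) = g"
      unfolding g_def by (auto simp: fun_eq_iff)
    ultimately show ?thesis by simp
  qed
  have "suminf g \<le> suminf f"
  proof (rule suminf_le)
    fix n show "g n \<le> f n"
    proof (cases "k \<le> n")
      case True
      then show ?thesis unfolding g_def f_def using mult_left_mono[OF Dk[OF True] pi0[of n]] by simp
    next
      case False
      have "0 \<le> D n" unfolding D_def by (rule Dn_nonneg)
      then show ?thesis unfolding g_def f_def using False pi0[of n] by simp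
    qed
  qed (use gs sumf in \<open>auto simp: sums_summable\<close>)
  moreover have "suminf g = R / 2 - R / 2 * (\<Sum>n<k. \<pi> n)"
    using sums_unique[OF gs, symmetric] by (simp add: sum_distrib_left)
  moreover have "(\<Sum>n<k. \<pi> n) \<le> 1 / 2"
    unfolding \<pi>_def k_def by (rule poisson_tail) (use t in simp)
  moreover have "R / 2 * (\<Sum>n<k. \<pi> n) \<le> R / 2 * (1 / 2)"
    using R \<open>(\<Sum>n<k. \<pi> n) \<le> 1 / 2\<close> by (intro mult_left_mono) auto
  ultimately have "R / 4 \<le> suminf f" by linarith
  then show ?thesis using \<open>exp_dist V E x t = suminf f\<close> by simp
qed

end

theorem corollary4p8:
  fixes n0 :: nat and V :: "nat list set" and E :: "nat list \<Rightarrow> nat list \<Rightarrow> bool"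
  assumes "n0 \<ge> 2"
    and "subgraph_of_tree n0 V E"
    and "infinite V"
    and "connected_graph V E"
  shows "\<exists>c1>0. \<forall>x r lam t. x \<in> V \<longrightarrow> r \<ge> 1 \<longrightarrow> lam \<ge> 64
            \<longrightarrow> good_ball V E x r lam \<longrightarrow> good_ball V E x (r / lam ^ 5) lam
            \<longrightarrow> r ^ 3 / lam ^ 6 \<le> t \<longrightarrow> t \<le> r ^ 3 / lam ^ 5
            \<longrightarrow> exp_dist V E x t \<ge> c1 / lam ^ 12 * t powr (1 / 3)"
proof -
  interpret TG n0 V E using assms by unfold_locales auto
  show ?thesis
  proof (rule exI[of _ "1/4"], intro conjI allI impI)
    show "(0::real) < 1 / 4" by simp
    fix x :: "nat list" and r lam t :: real
    assume x: "x \<in> V" and r1: "r \<ge> 1" and l64: "lam \<ge> 64"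
      and g1: "good_ball V E x r lam" and g2: "good_ball V E x (r / lam ^ 5) lam"
      and t1: "r ^ 3 / lam ^ 6 \<le> t" and t2: "t \<le> r ^ 3 / lam ^ 5"
    define s where "s = r / lam ^ 5"
    define rho where "rho = r / lam ^ 2"
    define m where "m = nat \<lceil>32 * r ^ 3 / lam ^ 11\<rceil> + 1"
    have lp: "lam > 0" using l64 by simp
    have rp: "r > 0" using r1 by simp
    have sp: "s > 0" unfolding s_def using lp rp by simp
    have rhop: "rho \<ge> 0" unfolding rho_def using lp rp by simp
    have vrho: "vol V E x rho \<ge> r ^ 2 / lam ^ 6" using g1 unfolding good_ball_def rho_def by simp
    have vrho_pos: "vol V E x rho > 0" using vrho lp rp
      by (smt (verit) divide_pos_pos zero_less_power)
    have vs: "vol V E x s \<le> s ^ 2 * lam" using g2 unfolding good_ball_def s_def by simp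
    have vs0: "vol V E x s \<ge> 0" unfolding vol_def by (intro sum_nonneg) auto
    have degx: "real (deg E x) \<le> vol V E x s"
    proof -
      have "x \<in> ball V E x s" using ball_self[OF x] sp by simp
      then show ?thesis unfolding vol_def
        using ball_fin[OF x] by (intro member_le_sum) auto
    qed
    have "real (deg E x) \<ge> 1" using deg_pos[OF x] by simp
    then have one: "1 \<le> s ^ 2 * lam" using degx vs by simp
    have sl: "s ^ 2 * lam = r ^ 2 / lam ^ 9"
      unfolding s_def using lp by (simp add: field_simps power_divide eval_nat_numeral)
    have "1 \<le> r ^ 2 / lam ^ 9" using one sl by simp
    then have r2: "r ^ 2 \<ge> lam ^ 9" using lp by (simp add: pos_le_divide_eq)
    define C where "C = 32 * r ^ 3 / lam ^ 11"
    have C0: "C \<ge> 0" unfolding C_def using lp rp by simp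
    have m1: "m \<ge> 1" unfolding m_def by simp
    have cr: "real (nat \<lceil>C\<rceil>) = of_int \<lceil>C\<rceil>" using C0 by (intro of_nat_nat) simp
    have meq: "real m = real (nat \<lceil>C\<rceil>) + 1" unfolding m_def C_def[symmetric] by simp
    have mge: "real m \<ge> C"
      using le_of_int_ceiling[of C] cr meq by linarith
    have mle: "real m \<le> C + 2"
      using of_int_ceiling_le_add_one[of C] cr meq by linarith
    have small1: "vol V E x s * (4 / vol V E x rho) \<le> 1 / 4"
    proof -
      have "vol V E x s * (4 / vol V E x rho) \<le> (s ^ 2 * lam) * (4 / (r ^ 2 / lam ^ 6))"
      proof (rule mult_mono)
        have q: "0 < r ^ 2 / lam ^ 6" using lp rp by simp
        show "4 / vol V E x rho \<le> 4 / (r ^ 2 / lam ^ 6)"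
          by (rule divide_left_mono[OF vrho], simp, rule mult_pos_pos[OF vrho_pos q])
      qed (use vs vs0 lp vrho_pos in auto)
      also have "\<dots> = 4 / lam ^ 3" unfolding sl using lp rp by (simp add: field_simps eval_nat_numeral)
      also have "\<dots> \<le> 1 / 4"
      proof -
        have "(64::real) ^ 3 \<le> lam ^ 3" using l64 by (intro power_mono) auto
        then show ?thesis using lp by (simp add: field_simps)
      qed
      finally show ?thesis .
    qed
    have small2: "vol V E x s * (8 * rho / real m) \<le> 1 / 4"
    proof -
      have mp: "real m > 0" using m1 by simp
      have "vol V E x s * (8 * rho / real m) \<le> (s ^ 2 * lam) * (8 * rho / real m)"
        using vs rhop mp by (intro mult_right_mono) auto
      also have "\<dots> = C / 4 / real m" unfolding sl C_def rho_def using lp rp by (simp add: field_simps eval_nat_numeral)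
      also have "\<dots> \<le> 1 / 4" using mge mp C0 by (simp add: field_simps)
      finally show ?thesis .
    qed
    have small: "vol V E x s * max (4 / vol V E x rho) (8 * rho / real m) \<le> 1 / 4"
      using small1 small2 by (simp add: max_def)
    have tcond: "t \<ge> 2 * (real (2 * m) + 1)"
    proof -
      have l5: "lam ^ 5 \<ge> 256"
      proof -
        have "(64::real) ^ 5 \<le> lam ^ 5" using l64 by (intro power_mono) auto
        then show ?thesis by simp
      qed
      have l3: "lam ^ 3 \<ge> 20"
      proof -
        have "(64::real) ^ 3 \<le> lam ^ 3" using l64 by (intro power_mono) auto
        then show ?thesis by simp
      qed
      define u where "u = r ^ 3 / lam ^ 11"
      have u0: "u \<ge> 0" unfolding u_def using lp rp by simp
      have tu: "r ^ 3 / lam ^ 6 = u * lam ^ 5" unfolding u_def using lp by (simp add: field_simps eval_nat_numeral)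
      have "r ^ 3 \<ge> r ^ 2" using r1 by (simp add: power_increasing)
      then have "r ^ 3 \<ge> lam ^ 9" using r2 by simp
      then have "r ^ 3 / lam ^ 6 \<ge> lam ^ 9 / lam ^ 6" using lp by (intro divide_right_mono) auto
      moreover have "lam ^ 9 / lam ^ 6 = lam ^ 3" using lp by (simp add: field_simps eval_nat_numeral)
      ultimately have A: "u * lam ^ 5 \<ge> lam ^ 3" using tu by simp
      have B: "u * lam ^ 5 \<ge> 256 * u" using l5 u0 by (simp add: mult_left_mono mult.commute)
      have "2 * (real (2 * m) + 1) \<le> 4 * (C + 2) + 2" using mle by simp
      also have "\<dots> = 128 * u + 10" unfolding C_def u_def by simp
      also have "\<dots> \<le> u * lam ^ 5" using A B l3 by linarith
      finally show ?thesis using t1 tu by simp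
    qed
    have main: "exp_dist V E x t \<ge> s / 4"
      by (rule core[OF x rhop vrho_pos _ m1 small tcond]) (use sp in simp)
    have tp: "t powr (1 / 3) \<le> r"
    proof -
      have t0: "t \<ge> 0" using t1 lp rp by (smt (verit) divide_nonneg_nonneg zero_le_power)
      have "r ^ 3 / lam ^ 5 \<le> r ^ 3"
        using lp rp l64 by (simp add: divide_le_eq)
      then have "t \<le> r ^ 3" using t2 by simp
      then have "t powr (1 / 3) \<le> (r ^ 3) powr (1 / 3)" using t0 by (intro powr_mono2) auto
      also have "(r ^ 3) powr (1 / 3) = r"
      proof -
        have "r ^ 3 = r powr 3" using rp by simp
        then have "(r ^ 3) powr (1 / 3) = r powr (3 * (1 / 3))" by (simp only: powr_powr)
        also have "\<dots> = r" using rp by simp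
        finally show ?thesis .
      qed
      finally show ?thesis .
    qed
    have "1 / 4 / lam ^ 12 * t powr (1 / 3) \<le> 1 / 4 / lam ^ 12 * r"
      using tp lp by (intro mult_left_mono) auto
    also have "\<dots> \<le> s / 4"
    proof -
      have "lam ^ 5 \<le> lam ^ 12" using l64 by (intro power_increasing) auto
      then have "r / lam ^ 12 \<le> r / lam ^ 5" using rp lp by (intro divide_left_mono) auto
      then show ?thesis unfolding s_def by simp
    qed
    also have "\<dots> \<le> exp_dist V E x t" by (rule main)
    finally show "1 / 4 / lam ^ 12 * t powr (1 / 3) \<le> exp_dist V E x t" .
  qed
qed

end
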